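(* Let $\mathbf{x}=(x_n)$ be a summable sequence of positive reals whose cardinal function $f$ is bounded, and let $z,w>0$ be reals such that either (1) $z+w>\sum_{n=1}^\infty x_n$, or (2) $z=w=\frac12\sum_{n=1}^\infty x_n$. Let $h$ be the cardinal function of the sequence $(z,w,x_1,x_2,\dots)$. Then $\max h\le 3\max f$. In particular, if $\mathrm{rng}(f)=\{1,2\}$ then $\max h\le6$.
   Context: For a summable sequence $\mathbf{x}=(x_n)$ of positive reals, $\mathcal{A}(\mathbf{x})=\{\sum_{n\in A}x_n: A\subseteq\mathbb{N}\}$ is its achievement set and its cardinal function $f$ assigns to $x\in\mathcal{A}(\mathbf{x})$ the cardinality (a positive integer, $\omega$, or $\mathfrak{c}$) of $\{(\varepsilon_n)\in\{0,1\}^{\mathbb{N}}:\sum\varepsilon_nx_n=x\}$. The cardinal function is bounded if there is $N\in\mathbb{N}$ with $f(x)\le N$ for all $x$; then $\max f$ denotes its largest value. *)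

theory Defs
  imports Complex_Main
begin

text \<open>A subset A of the index set encodes the 0-1 sequence (its indicator).
  reps x s is the set of all such codes whose subsum equals s.\<close>
definition reps :: "(nat \<Rightarrow> real) \<Rightarrow> real \<Rightarrow> nat set set" where
  "reps x s = {A. (\<lambda>n. if n \<in> A then x n else 0) sums s}"

definition achievement_set :: "(nat \<Rightarrow> real) \<Rightarrow> real set" where
  "achievement_set x = {s. reps x s \<noteq> {}}"

definition bounded_cardfun :: "(nat \<Rightarrow> real) \<Rightarrow> bool" where
  "bounded_cardfun x \<longleftrightarrow> (\<exists>N::nat. \<forall>s \<in> achievement_set x. finite (reps x s) \<and> card (reps x s) \<le> N)"

text \<open>Range of the cardinal function (meaningful as nat values when it is bounded).\<close>
definition cardfun_range :: "(nat \<Rightarrow> real) \<Rightarrow> nat set" where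
  "cardfun_range x = (\<lambda>s. card (reps x s)) ` achievement_set x"

definition max_cardfun :: "(nat \<Rightarrow> real) \<Rightarrow> nat" where
  "max_cardfun x = Max (cardfun_range x)"

definition prepend2 :: "real \<Rightarrow> real \<Rightarrow> (nat \<Rightarrow> real) \<Rightarrow> nat \<Rightarrow> real" where
  "prepend2 z w x n = (if n = 0 then z else if n = 1 then w else x (n - 2))"

end

theory Submission
  imports Defs
begin

lemma shift2:
  assumes "(\<lambda>n. if n \<in> B then prepend2 z w x n else 0) sums s"
  shows "(\<lambda>n. if n \<in> {n. Suc (Suc n) \<in> B} then x n else 0) sums
           (s - (if 0 \<in> B then z else 0) - (if 1 \<in> B then w else 0))"
proof -
  define g where "g = (\<lambda>n. if n \<in> B then prepend2 z w x n else 0)"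
  have "g sums s" using assms g_def by simp
  hence "g sums ((s - g 0) + g 0)" by simp
  hence "(\<lambda>n. g (Suc n)) sums (s - g 0)" using sums_Suc_iff by blast
  hence "(\<lambda>n. g (Suc n)) sums ((s - g 0 - g 1) + g (Suc 0))" by simp
  hence "(\<lambda>n. g (Suc (Suc n))) sums (s - g 0 - g 1)"
    using sums_Suc_iff[of "\<lambda>n. g (Suc n)"] by blast
  moreover have "(\<lambda>n. g (Suc (Suc n))) = (\<lambda>n. if n \<in> {n. Suc (Suc n) \<in> B} then x n else 0)"
    by (auto simp: g_def prepend2_def)
  moreover have "g 0 = (if 0 \<in> B then z else 0)" "g 1 = (if 1 \<in> B then w else 0)"
    by (auto simp: g_def prepend2_def)
  ultimately show ?thesis by simp
qed

definition E :: "bool \<Rightarrow> bool \<Rightarrow> nat set \<Rightarrow> nat set" where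
  "E a b A = {n. (n = 0 \<and> a) \<or> (n = 1 \<and> b) \<or> (n \<ge> 2 \<and> n - 2 \<in> A)}"

lemma decomp:
  "reps (prepend2 z w x) s \<subseteq> E False False ` reps x s \<union> E True False ` reps x (s - z)
     \<union> E False True ` reps x (s - w) \<union> E True True ` reps x (s - z - w)"
proof
  fix B assume "B \<in> reps (prepend2 z w x) s"
  hence h: "(\<lambda>n. if n \<in> {n. Suc (Suc n) \<in> B} then x n else 0) sums
           (s - (if 0 \<in> B then z else 0) - (if 1 \<in> B then w else 0))"
    using shift2 by (auto simp: reps_def)
  define A where "A = {n. Suc (Suc n) \<in> B}"
  have hB: "B = E (0 \<in> B) (1 \<in> B) A"
    unfolding E_def A_def
  proof (intro set_eqI iffI)
    fix n assume "n \<in> B"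
    thus "n \<in> {n. (n = 0 \<and> 0 \<in> B) \<or> (n = 1 \<and> 1 \<in> B) \<or> (n \<ge> 2 \<and> n - 2 \<in> {n. Suc (Suc n) \<in> B})}"
      by (cases n rule: nat.exhaust; cases "n - 1" rule: nat.exhaust) auto
  next
    fix n assume "n \<in> {n. (n = 0 \<and> 0 \<in> B) \<or> (n = 1 \<and> 1 \<in> B) \<or> (n \<ge> 2 \<and> n - 2 \<in> {n. Suc (Suc n) \<in> B})}"
    thus "n \<in> B"
      by (cases n rule: nat.exhaust; cases "n - 1" rule: nat.exhaust) auto
  qed
  have hA: "A \<in> reps x (s - (if 0 \<in> B then z else 0) - (if 1 \<in> B then w else 0))"
    using h A_def reps_def by simp
  show "B \<in> E False False ` reps x s \<union> E True False ` reps x (s - z)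
     \<union> E False True ` reps x (s - w) \<union> E True True ` reps x (s - z - w)"
    using hA hB by (cases "0 \<in> B"; cases "1 \<in> B") auto
qed

lemma card_decomp:
  assumes fin: "\<And>t. finite (reps x t)"
  shows "finite (reps (prepend2 z w x) s) \<and> card (reps (prepend2 z w x) s) \<le>
     card (reps x s) + card (reps x (s - z)) + card (reps x (s - w)) + card (reps x (s - z - w))"
proof -
  let ?U = "E False False ` reps x s \<union> E True False ` reps x (s - z)
     \<union> E False True ` reps x (s - w) \<union> E True True ` reps x (s - z - w)"
  have fU: "finite ?U" using fin by auto
  have "card ?U \<le> card (reps x s) + card (reps x (s - z)) + card (reps x (s - w)) + card (reps x (s - z - w))"
    by (meson add_mono card_Un_le card_image_le fin order_trans)
  thus ?thesis using decomp[of z w x s] fU card_mono finite_subset by (meson order_trans)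
qed

lemma reps_bounds:
  assumes pos: "\<And>n. x n > 0" and summ: "summable x" and A: "A \<in> reps x t"
  shows "0 \<le> t \<and> t \<le> suminf x"
proof -
  have s: "(\<lambda>n. if n \<in> A then x n else 0) sums t" using A by (simp add: reps_def)
  have "0 \<le> suminf (\<lambda>n. if n \<in> A then x n else 0)"
    using s pos by (intro suminf_nonneg) (auto simp: sums_iff less_imp_le)
  moreover have "suminf (\<lambda>n. if n \<in> A then x n else 0) \<le> suminf x"
    using s summ pos by (intro suminf_le) (auto simp: sums_iff less_imp_le)
  ultimately show ?thesis using s by (simp add: sums_iff)
qed

lemma reps_compl:
  assumes summ: "summable x" and A: "A \<in> reps x t"
  shows "- A \<in> reps x (suminf x - t)"
proof -
  have s: "(\<lambda>n. if n \<in> A then x n else 0) sums t" using A by (simp add: reps_def)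
  have "(\<lambda>n. x n - (if n \<in> A then x n else 0)) sums (suminf x - t)"
    using sums_diff[OF summable_sums[OF summ] s] .
  moreover have "(\<lambda>n. x n - (if n \<in> A then x n else 0)) = (\<lambda>n. if n \<in> - A then x n else 0)"
    by auto
  ultimately show ?thesis by (simp add: reps_def)
qed

lemma reps_zero:
  assumes pos: "\<And>n. x n > 0" and A: "A \<in> reps x 0"
  shows "A = {}"
proof -
  have s: "(\<lambda>n. if n \<in> A then x n else 0) sums 0" using A by (simp add: reps_def)
  hence "\<forall>n. (if n \<in> A then x n else 0) = 0"
    using pos by (subst suminf_eq_zero_iff[symmetric]) (auto simp: sums_iff less_imp_le)
  thus ?thesis using pos by (metis equals0I less_irrefl)
qed

lemma reps_full:
  assumes pos: "\<And>n. x n > 0" and summ: "summable x" and A: "A \<in> reps x (suminf x)"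
  shows "A = UNIV"
proof -
  have "- A \<in> reps x 0" using reps_compl[OF summ A] by simp
  thus ?thesis using reps_zero[where x=x, OF pos] by blast
qed

theorem lemma7p1:
  fixes x :: "nat \<Rightarrow> real" and z w :: real
  assumes pos: "\<And>n. x n > 0"
    and summ: "summable x"
    and bdd: "bounded_cardfun x"
    and zpos: "z > 0" and wpos: "w > 0"
    and cases: "z + w > suminf x \<or> (z = suminf x / 2 \<and> w = suminf x / 2)"
  shows "bounded_cardfun (prepend2 z w x)
    \<and> max_cardfun (prepend2 z w x) \<le> 3 * max_cardfun x
    \<and> (cardfun_range x = {1, 2} \<longrightarrow> max_cardfun (prepend2 z w x) \<le> 6)"
proof -
  define M where "M = max_cardfun x"
  define S where "S = suminf x"
  define f where "f t = card (reps x t)" for t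
  obtain N where N: "\<forall>s \<in> achievement_set x. finite (reps x s) \<and> card (reps x s) \<le> N"
    using bdd bounded_cardfun_def by blast
  have finR: "finite (cardfun_range x)"
    by (rule finite_subset[of _ "{..N}"]) (auto simp: cardfun_range_def N)
  have fin: "finite (reps x t)" for t
    using N by (cases "t \<in> achievement_set x") (auto simp: achievement_set_def)
  have fM: "f t \<le> M" for t
  proof (cases "t \<in> achievement_set x")
    case True
    thus ?thesis using finR by (auto simp: f_def M_def max_cardfun_def cardfun_range_def)
  next
    case False
    thus ?thesis by (simp add: achievement_set_def f_def)
  qed
  have fout: "f t = 0" if "t < 0 \<or> t > S" for t
  proof -
    have "reps x t = {}" using reps_bounds[where x=x, OF pos summ] that S_def by force
    thus ?thesis by (simp add: f_def)
  qed
  have f0: "f 0 \<le> 1"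
  proof -
    have "reps x 0 \<subseteq> {{}}" using reps_zero[where x=x, OF pos] by blast
    hence "card (reps x 0) \<le> card {{}::nat set}" by (intro card_mono) auto
    thus ?thesis unfolding f_def by simp
  qed
  have fS: "f S \<le> 1"
  proof -
    have "reps x S \<subseteq> {UNIV}" using reps_full[where x=x, OF pos summ] S_def by blast
    hence "card (reps x S) \<le> card {UNIV::nat set}" by (intro card_mono) auto
    thus ?thesis unfolding f_def by simp
  qed
  have e0: "{} \<in> reps x 0" by (simp add: reps_def)
  have M1: "1 \<le> M"
  proof -
    have "1 \<le> f 0" using fin[of 0] e0 unfolding f_def by (metis card_0_eq empty_iff less_one not_less)
    thus ?thesis using fM[of 0] by linarith
  qed
  have half: "f (S/2) = 0 \<or> 2 \<le> f (S/2)"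
  proof (cases "reps x (S/2) = {}")
    case True thus ?thesis by (simp add: f_def)
  next
    case False
    then obtain A where A: "A \<in> reps x (S/2)" by blast
    have "- A \<in> reps x (S/2)" using reps_compl[OF summ A] S_def by simp
    moreover have "A \<noteq> - A" by auto
    ultimately have "2 \<le> card (reps x (S/2))"
      using A fin[of "S/2"]
    proof -
      have "card {A, - A} \<le> card (reps x (S/2))"
        using A \<open>- A \<in> reps x (S/2)\<close> fin[of "S/2"] by (intro card_mono) auto
      thus ?thesis using \<open>A \<noteq> - A\<close> by simp
    qed
    thus ?thesis by (simp add: f_def)
  qed
  let ?y = "prepend2 z w x"
  have main: "finite (reps ?y s) \<and> card (reps ?y s) \<le> 3 * M" for s
  proof -
    have cd: "finite (reps ?y s) \<and> card (reps ?y s) \<le> f s + f (s - z) + f (s - w) + f (s - z - w)"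
      using card_decomp[OF fin] f_def by simp
    have "f s + f (s - z) + f (s - w) + f (s - z - w) \<le> 3 * M"
    proof (cases "z + w > S")
      case True
      show ?thesis
      proof (cases "s \<le> S")
        case True
        hence "f (s - z - w) = 0" using \<open>z + w > S\<close> fout by simp
        thus ?thesis using fM[of s] fM[of "s-z"] fM[of "s-w"] by linarith
      next
        case False
        hence "f s = 0" using fout by simp
        thus ?thesis using fM[of "s-z-w"] fM[of "s-z"] fM[of "s-w"] by linarith
      qed
    next
      case False
      hence zw: "z = S/2" "w = S/2" using cases S_def by auto
      consider "s < S" | "s > S" | "s = S" by linarith
      thus ?thesis
      proof cases
        case 1
        hence "f (s - z - w) = 0" using zw fout by simp
        thus ?thesis using fM[of s] fM[of "s-z"] fM[of "s-w"] by linarith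
      next
        case 2
        hence "f s = 0" using fout by simp
        thus ?thesis using fM[of "s-z-w"] fM[of "s-z"] fM[of "s-w"] by linarith
      next
        case 3
        hence e: "s - z = S/2" "s - w = S/2" "s - z - w = 0" using zw by auto
        have "f s + f (s - z) + f (s - w) + f (s - z - w) = f S + f (S/2) + f (S/2) + f 0"
          using e 3 by simp
        thus ?thesis using half fM[of "S/2"] f0 fS M1 by linarith
      qed
    qed
    thus ?thesis using cd by linarith
  qed
  have bc: "bounded_cardfun ?y" unfolding bounded_cardfun_def using main by blast
  have finY: "finite (cardfun_range ?y)"
    by (rule finite_subset[of _ "{..3*M}"]) (auto simp: cardfun_range_def main)
  have "{} \<in> reps ?y 0" by (simp add: reps_def)
  hence "0 \<in> achievement_set ?y" by (auto simp: achievement_set_def)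
  hence neY: "cardfun_range ?y \<noteq> {}" by (auto simp: cardfun_range_def)
  have mx: "max_cardfun ?y \<le> 3 * M"
    unfolding max_cardfun_def using finY neY main
    by (subst Max_le_iff) (auto simp: cardfun_range_def)
  have "cardfun_range x = {1, 2} \<longrightarrow> M = 2"
    by (simp add: M_def max_cardfun_def)
  with bc mx show ?thesis by (auto simp: M_def)
qed

end
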